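(* Let $1\le k\le n$, $x=(x',x'')\in\mathbb{R}^k\times\mathbb{R}^{n-k}$, $1<p<\infty$, $\alpha\in\mathbb{R}$. Then for all complex-valued $f\in C_0^\infty(\mathbb{R}^n\setminus\{x'=0\})$, $$\left|\frac{k-\alpha}{p}\right|^p\left\|\frac{f}{|x'|_k^{\alpha/p}}\right\|_{L^p(\mathbb{R}^n)}^p\le\left\|\frac{|\nabla f|}{|x'|_k^{\alpha/p-1}}\right\|_{L^p(\mathbb{R}^n)}^p-\int_{\mathbb{R}^n}C_p\!\left(\frac{x'\cdot\nabla_k f}{|x'|_k^{\alpha/p}},\;\frac{x'\cdot\nabla_k f}{|x'|_k^{\alpha/p}}+\frac{k-\alpha}{p}\frac{f}{|x'|_k^{\alpha/p}}\right)dx,$$ where $\nabla$ is the full gradient on $\mathbb{R}^n$.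
   Context: $|\cdot|_k$ denotes the Euclidean norm on $\mathbb{R}^k$, $\nabla_k=(\partial_{x_1},\dots,\partial_{x_k})$, $x'\cdot\nabla_k f=\sum_{j=1}^k x_j\partial_{x_j}f$, and $|\nabla f|$ is the Euclidean length of the (complex) full gradient. For complex numbers $\xi,\eta$ and $1<p<\infty$, $C_p(\xi,\eta):=|\xi|^p-|\xi-\eta|^p-p|\xi-\eta|^{p-2}\operatorname{Re}((\xi-\eta)\overline{\eta})$, with the last term interpreted as $0$ when $\xi=\eta$. *)

theory Defs
  imports "HOL-Analysis.Analysis"
begin

definition pdiff :: "'n::finite \<Rightarrow> (real^'n \<Rightarrow> complex) \<Rightarrow> real^'n \<Rightarrow> complex" where
  "pdiff i g x = vector_derivative (\<lambda>t. g (x + t *\<^sub>R axis i 1)) (at 0)"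

fun pderivs :: "'n::finite list \<Rightarrow> (real^'n \<Rightarrow> complex) \<Rightarrow> real^'n \<Rightarrow> complex" where
  "pderivs [] g = g"
| "pderivs (i # is) g = pdiff i (pderivs is g)"

definition smooth_fun :: "(real^'n::finite \<Rightarrow> complex) \<Rightarrow> bool" where
  "smooth_fun g \<longleftrightarrow> (\<forall>is. continuous_on UNIV (pderivs is g) \<and>
      (\<forall>i x. ((\<lambda>t. pderivs is g (x + t *\<^sub>R axis i 1)) has_vector_derivative
                 pderivs (i # is) g x) (at 0)))"

(* Euclidean norm of the partial vector x' = (x_i)_{i in K} *)
definition normK :: "'n::finite set \<Rightarrow> real^'n \<Rightarrow> real" where
  "normK K x = sqrt (\<Sum>i\<in>K. (x $ i)\<^sup>2)"

definition grad_norm :: "(real^'n::finite \<Rightarrow> complex) \<Rightarrow> real^'n \<Rightarrow> real" where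
  "grad_norm g x = sqrt (\<Sum>i\<in>UNIV. (cmod (pdiff i g x))\<^sup>2)"

definition radial_deriv :: "'n::finite set \<Rightarrow> (real^'n \<Rightarrow> complex) \<Rightarrow> real^'n \<Rightarrow> complex" where
  "radial_deriv K g x = (\<Sum>i\<in>K. of_real (x $ i) * pdiff i g x)"

definition Cp :: "real \<Rightarrow> complex \<Rightarrow> complex \<Rightarrow> real" where
  "Cp p \<xi> \<eta> = (if \<xi> = \<eta> then cmod \<xi> powr p
     else cmod \<xi> powr p - cmod (\<xi> - \<eta>) powr p
          - p * cmod (\<xi> - \<eta>) powr (p - 2) * Re ((\<xi> - \<eta>) * cnj \<eta>))"

end

theory Submission
  imports Defs
begin


lemma abs_pow_deriv:
  fixes g :: "real \<Rightarrow> complex"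
  assumes gd: "(g has_vector_derivative g') (at t)" and p: "1 < p"
  shows "((\<lambda>s. cmod (g s) powr p) has_real_derivative
           p * cmod (g t) powr (p-2) * Re (cnj (g t) * g')) (at t)"
proof (cases "g t = 0")
  case False
  have gd': "(g has_derivative (\<lambda>h. h *\<^sub>R g')) (at t)"
    using gd by (simp add: has_vector_derivative_def)
  have q: "((\<lambda>s. g s \<bullet> g s) has_real_derivative 2 * (g t \<bullet> g')) (at t)"
    unfolding has_field_derivative_def
    by (rule has_derivative_eq_rhs[OF has_derivative_inner[OF gd' gd']])
       (auto simp: inner_commute algebra_simps)
  have pos: "g t \<bullet> g t > 0" using False by simp
  have d: "((\<lambda>s. (g s \<bullet> g s) powr (p/2)) has_real_derivative
      (p/2) * (g t \<bullet> g t) powr (p/2 - of_nat 1) * (2 * (g t \<bullet> g'))) (at t)"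
    by (rule DERIV_fun_powr[OF q pos])
  have e: "\<And>z::complex. (z \<bullet> z) powr (p/2) = cmod z powr p"
    by (simp add: power2_norm_eq_inner[symmetric] powr_numeral[symmetric] powr_powr del: powr_numeral)
  have e2: "(g t \<bullet> g t) powr (p/2 - of_nat 1) = cmod (g t) powr (p - 2)"
  proof -
    have "(g t \<bullet> g t) = cmod (g t) powr 2"
      by (simp add: power2_norm_eq_inner[symmetric] powr_numeral[symmetric] del: powr_numeral)
    then show ?thesis by (simp only: powr_powr) (simp add: algebra_simps)
  qed
  have e3: "g t \<bullet> g' = Re (cnj (g t) * g')"
    by (simp add: inner_complex_def)
  show ?thesis using d unfolding e e2 e3 by (simp add: algebra_simps)
next
  case True
  have "((\<lambda>y. norm ((g y - g t) - (y - t) *\<^sub>R g') / norm (y - t)) \<longlongrightarrow> 0) (at t)"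
    using gd by (simp add: has_vector_derivative_def has_derivative_iff_norm)
  then have ev: "eventually (\<lambda>y. norm ((g y - g t) - (y - t) *\<^sub>R g') / norm (y - t) < 1) (at t)"
    by (rule order_tendstoD) simp
  have ev2: "eventually (\<lambda>y. norm (cmod (g y) powr p / (y - t)) \<le> (1 + cmod g') powr p * \<bar>y - t\<bar> powr (p - 1)) (at t)"
    using ev eventually_at_filter
  proof -
    have "eventually (\<lambda>y. y \<noteq> t) (at t)" by (simp add: eventually_at_filter)
    with ev show ?thesis
    proof eventually_elim
      case (elim y)
      have yt: "\<bar>y - t\<bar> > 0" using elim by simp
      have "norm ((g y - g t) - (y - t) *\<^sub>R g') < \<bar>y - t\<bar>"
        using elim yt by (simp add: divide_less_eq)
      then have "cmod (g y) \<le> \<bar>y - t\<bar> + \<bar>y - t\<bar> * cmod g'"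
        using True norm_triangle_ineq[of "g y - (y - t) *\<^sub>R g'" "(y - t) *\<^sub>R g'"]
        by (simp add: abs_mult)
      then have gy: "cmod (g y) \<le> (1 + cmod g') * \<bar>y - t\<bar>" by (simp add: algebra_simps)
      have "cmod (g y) powr p \<le> ((1 + cmod g') * \<bar>y - t\<bar>) powr p"
        using gy p by (intro powr_mono2) auto
      also have "\<dots> = (1 + cmod g') powr p * \<bar>y - t\<bar> powr p"
        by (simp add: powr_mult)
      also have "\<bar>y - t\<bar> powr p = \<bar>y - t\<bar> powr (p - 1) * \<bar>y - t\<bar>"
        using yt by (simp add: powr_diff)
      finally have "cmod (g y) powr p \<le> (1 + cmod g') powr p * \<bar>y - t\<bar> powr (p - 1) * \<bar>y - t\<bar>"
        by (simp add: mult.assoc)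
      then show ?case using yt by (simp add: divide_le_eq abs_divide)
    qed
  qed
  have lim: "((\<lambda>y. (1 + cmod g') powr p * \<bar>y - t\<bar> powr (p - 1)) \<longlongrightarrow> 0) (at t)"
  proof -
    have "((\<lambda>y. \<bar>y - t\<bar> powr (p - 1)) \<longlongrightarrow> 0) (at t)"
      using p by (intro tendsto_zero_powrI) (auto intro!: tendsto_eq_intros)
    then show ?thesis using tendsto_mult_right_zero by blast
  qed
  have "((\<lambda>y. (cmod (g y) powr p - cmod (g t) powr p) / (y - t)) \<longlongrightarrow> 0) (at t)"
    using Lim_null_comparison[OF ev2 lim] True by simp
  then show ?thesis using True by (simp add: has_field_derivative_iff)
qed


lemma sm_cont: "smooth_fun f \<Longrightarrow> continuous_on UNIV f"
  unfolding smooth_fun_def by (metis pderivs.simps(1))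

lemma sm_pd_cont: "smooth_fun f \<Longrightarrow> continuous_on UNIV (pdiff i f)"
  unfolding smooth_fun_def by (metis pderivs.simps)

lemma sm_line: "smooth_fun f \<Longrightarrow>
   ((\<lambda>t. f (x + t *\<^sub>R axis i 1)) has_vector_derivative pdiff i f x) (at 0)"
  unfolding smooth_fun_def by (metis pderivs.simps)

lemma axis_comp: "(axis i (1::real)) $ j = (if j = i then 1 else 0)"
  by (simp add: axis_def)

lemma normK_line_deriv:
  assumes "finite K" "i \<in> K" "normK K y > 0"
  shows "((\<lambda>s. normK K (y + s *\<^sub>R axis i 1)) has_real_derivative y $ i / normK K y) (at 0)"
proof -
  have sq: "((\<lambda>s. \<Sum>j\<in>K. ((y + s *\<^sub>R axis i 1) $ j)\<^sup>2) has_real_derivative 2 * y $ i) (at 0)"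
  proof -
    have e: "(\<lambda>s. \<Sum>j\<in>K. ((y + s *\<^sub>R axis i 1) $ j)\<^sup>2) = (\<lambda>s. \<Sum>j\<in>K. (y $ j + s * (if j = i then 1 else 0))\<^sup>2)"
      by (simp add: axis_comp)
    have "((\<lambda>s. \<Sum>j\<in>K. (y $ j + s * (if j = i then 1 else 0))\<^sup>2) has_real_derivative
        (\<Sum>j\<in>K. 2 * y $ j * (if j = i then 1 else 0))) (at 0)"
      by (rule derivative_eq_intros refl | simp add: mult_ac)+
    then have "((\<lambda>s. \<Sum>j\<in>K. ((y + s *\<^sub>R axis i 1) $ j)\<^sup>2) has_real_derivative
        (\<Sum>j\<in>K. 2 * y $ j * (if j = i then 1 else 0))) (at 0)" by (simp only: e)
    also have "(\<Sum>j\<in>K. 2 * y $ j * (if j = i then 1 else 0)) = 2 * y $ i"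
      using assms by (simp add: if_distrib sum.delta cong: if_cong)
    finally show ?thesis .
  qed
  have pos: "(\<Sum>j\<in>K. ((y + 0 *\<^sub>R axis i 1) $ j)\<^sup>2) > 0"
    using assms(3) by (simp add: normK_def)
  have A: "((\<lambda>s. sqrt (\<Sum>j\<in>K. ((y + s *\<^sub>R axis i 1) $ j)\<^sup>2)) has_real_derivative
          inverse (sqrt (\<Sum>j\<in>K. ((y + 0 *\<^sub>R axis i 1) $ j)\<^sup>2)) / 2 * (2 * y $ i)) (at 0)"
    by (rule DERIV_chain2[OF DERIV_real_sqrt[OF pos] sq])
  have B: "inverse (sqrt (\<Sum>j\<in>K. ((y + 0 *\<^sub>R axis i 1) $ j)\<^sup>2)) / 2 * (2 * y $ i) = y $ i / normK K y"
    unfolding normK_def by (simp only: scale_zero_left add_0_right) (simp add: field_simps)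
  have fe: "(\<lambda>s. normK K (y + s *\<^sub>R axis i 1)) = (\<lambda>s. sqrt (\<Sum>j\<in>K. ((y + s *\<^sub>R axis i 1) $ j)\<^sup>2))"
    by (simp add: normK_def)
  show ?thesis using A unfolding fe B .
qed


definition psiF :: "'n::finite set \<Rightarrow> real \<Rightarrow> real \<Rightarrow> (real^'n \<Rightarrow> complex) \<Rightarrow> 'n \<Rightarrow> real^'n \<Rightarrow> real" where
  "psiF K p a f i x = x $ i * normK K x powr (-a) * cmod (f x) powr p"

definition DF :: "'n::finite set \<Rightarrow> real \<Rightarrow> real \<Rightarrow> (real^'n \<Rightarrow> complex) \<Rightarrow> 'n \<Rightarrow> real^'n \<Rightarrow> real" where
  "DF K p a f i x = normK K x powr (-a) * cmod (f x) powr p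
     + x $ i * ((-a) * normK K x powr (-a-1) * (x $ i / normK K x)) * cmod (f x) powr p
     + x $ i * normK K x powr (-a) * (p * cmod (f x) powr (p-2) * Re (cnj (f x) * pdiff i f x))"

lemma normK_nonneg[simp]: "normK K y \<ge> 0" by (simp add: normK_def sum_nonneg)

lemma away_zero:
  assumes "compact S" "\<forall>x. x \<notin> S \<longrightarrow> f x = 0" "y \<notin> S"
  obtains e where "e > 0" "\<And>z. dist z y < e \<Longrightarrow> f z = 0"
proof -
  have "open (- S)" using assms(1) by (simp add: compact_imp_closed open_Compl)
  then obtain e where "e > 0" "ball y e \<subseteq> - S" using assms(3)
    by (meson ComplI open_contains_ball)
  then show ?thesis
    by (intro that[of e]) (use assms(2) in \<open>auto simp: dist_commute subset_iff\<close>)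
qed

lemma psi_deriv:
  fixes f :: "real^'n::finite \<Rightarrow> complex"
  assumes sm: "smooth_fun f" and p: "1 < p" and iK: "i \<in> K"
    and S: "compact S" "S \<inter> {x. normK K x = 0} = {}" "\<forall>x. x \<notin> S \<longrightarrow> f x = 0"
  shows "((\<lambda>s. psiF K p a f i (y + s *\<^sub>R axis i 1)) has_real_derivative DF K p a f i y) (at 0)"
proof (cases "normK K y > 0")
  case True
  have fin: "finite K" by simp
  have da: "((\<lambda>s. (y + s *\<^sub>R axis i 1) $ i) has_real_derivative 1) (at 0)"
  proof -
    have "(\<lambda>s. (y + s *\<^sub>R axis i 1) $ i) = (\<lambda>s. y $ i + s)" by simp
    moreover have "((\<lambda>s. y $ i + s) has_real_derivative 1) (at 0)"
      by (rule derivative_eq_intros refl | simp)+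
    ultimately show ?thesis by simp
  qed
  have pos0: "normK K (y + 0 *\<^sub>R axis i 1) > 0" using True by simp
  have db: "((\<lambda>s. normK K (y + s *\<^sub>R axis i 1) powr (-a)) has_real_derivative
       (-a) * normK K (y + 0 *\<^sub>R axis i 1) powr (-a - of_nat 1) * (y $ i / normK K y)) (at 0)"
    by (rule DERIV_fun_powr[OF normK_line_deriv[OF fin iK True] pos0])
  have dc: "((\<lambda>s. cmod (f (y + s *\<^sub>R axis i 1)) powr p) has_real_derivative
       p * cmod (f (y + 0 *\<^sub>R axis i 1)) powr (p-2) * Re (cnj (f (y + 0 *\<^sub>R axis i 1)) * pdiff i f y)) (at 0)"
    by (rule abs_pow_deriv[OF sm_line[OF sm] p])
  note d = DERIV_mult[OF DERIV_mult[OF da db] dc]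
  show ?thesis unfolding psiF_def
    by (rule DERIV_cong[OF d]) (simp add: DF_def algebra_simps)
next
  case False
  moreover have "normK K y \<ge> 0" by (simp add: normK_def sum_nonneg)
  ultimately have r0: "normK K y = 0" by linarith
  then have yS: "y \<notin> S" using S(2) by auto
  obtain e where e: "e > 0" "\<And>z. dist z y < e \<Longrightarrow> f z = 0"
    using away_zero[OF S(1) S(3) yS] by blast
  have DF0: "DF K p a f i y = 0" using r0 by (simp add: DF_def)
  show ?thesis unfolding DF0
  proof (rule has_field_derivative_transform_within[of "\<lambda>_. 0" 0 0 UNIV e])
    show "((\<lambda>_. 0) has_real_derivative 0) (at 0)" by simp
    show "0 < e" by fact
    show "0 \<in> UNIV" by simp
    fix s :: real assume "dist s 0 < e"
    then have "dist (y + s *\<^sub>R axis i 1) y < e" by (simp add: dist_norm)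
    then have "f (y + s *\<^sub>R axis i 1) = 0" by (rule e(2))
    then show "0 = psiF K p a f i (y + s *\<^sub>R axis i 1)"
      using p by (simp add: psiF_def)
  qed
qed


lemma normK_cont: "continuous_on UNIV (normK K)"
  unfolding normK_def[abs_def] by (intro continuous_intros)

lemma normK_meas[measurable]: "normK K \<in> borel_measurable borel"
  by (rule borel_measurable_continuous_onI[OF normK_cont])

lemma int_cs:
  fixes g :: "real^'n::finite \<Rightarrow> 'b::{banach, second_countable_topology}"
  assumes "compact S" "continuous_on S g" "\<And>x. x \<notin> S \<Longrightarrow> g x = 0"
  shows "integrable lborel g"
proof -
  have "integrable lborel (\<lambda>x. indicator S x *\<^sub>R g x)"
    by (rule borel_integrable_compact[OF assms(1,2)])
  moreover have "(\<lambda>x. indicator S x *\<^sub>R g x) = g"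
    using assms(3) by (auto simp: indicator_def)
  ultimately show ?thesis by simp
qed

lemma bdd_cs:
  fixes g :: "'a::topological_space \<Rightarrow> real"
  assumes "compact S" "continuous_on S g"
  obtains B where "B \<ge> 0" "\<And>x. x \<in> S \<Longrightarrow> \<bar>g x\<bar> \<le> B"
proof -
  have "bounded (g ` S)" by (rule compact_imp_bounded[OF compact_continuous_image[OF assms(2,1)]])
  then obtain B where "\<forall>x\<in>g ` S. norm x \<le> B" by (auto simp: bounded_iff)
  then show ?thesis by (intro that[of "max B 0"]) auto
qed

lemma transl:
  fixes g :: "real^'n::finite \<Rightarrow> real"
  assumes "integrable lborel g" "g \<in> borel_measurable borel"
  shows "integrable lborel (\<lambda>y. g (c + y))" "integral\<^sup>L lborel (\<lambda>y. g (c + y)) = integral\<^sup>L lborel g"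
proof -
  have m: "(+) c \<in> measurable lborel borel" by simp
  have "integrable (distr lborel borel ((+) c)) g" using assms(1) by (simp add: lborel_distr_plus)
  then show "integrable lborel (\<lambda>y. g (c + y))"
    using integrable_distr_eq[OF m assms(2)] by simp
  have "integral\<^sup>L (distr lborel borel ((+) c)) g = integral\<^sup>L lborel (\<lambda>y. g (c + y))"
    by (rule integral_distr[OF m assms(2)])
  then show "integral\<^sup>L lborel (\<lambda>y. g (c + y)) = integral\<^sup>L lborel g"
    by (simp add: lborel_distr_plus)
qed

lemma powr_re_bound:
  fixes z d :: complex
  assumes "1 < p"
  shows "\<bar>cmod z powr (p-2) * Re (cnj z * d)\<bar> \<le> cmod z powr (p-1) * cmod d"
proof (cases "z = 0")
  case True then show ?thesis by simp
next
  case False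
  have "\<bar>Re (cnj z * d)\<bar> \<le> cmod z * cmod d"
    using abs_Re_le_cmod[of "cnj z * d"] by (simp add: norm_mult)
  then have "\<bar>cmod z powr (p-2) * Re (cnj z * d)\<bar> \<le> cmod z powr (p-2) * (cmod z * cmod d)"
    by (simp add: abs_mult mult_left_mono)
  also have "\<dots> = cmod z powr (p-1) * cmod d"
  proof -
    have "cmod z powr (p-2) * cmod z powr 1 = cmod z powr (p-2+1)" by (rule powr_add[symmetric])
    then show ?thesis by (simp add: mult.assoc[symmetric])
  qed
  finally show ?thesis .
qed


lemma sm_meas: "smooth_fun f \<Longrightarrow> f \<in> borel_measurable borel"
  by (rule borel_measurable_continuous_onI[OF sm_cont])

lemma sm_pd_meas: "smooth_fun f \<Longrightarrow> pdiff i f \<in> borel_measurable borel"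
  by (rule borel_measurable_continuous_onI[OF sm_pd_cont])

lemma psi_meas: assumes "smooth_fun f" shows "psiF K p a f i \<in> borel_measurable borel"
proof -
  note [measurable] = sm_meas[OF assms]
  show ?thesis unfolding psiF_def[abs_def] by measurable
qed

lemma cnj_meas[measurable (raw)]: "g \<in> borel_measurable M \<Longrightarrow> (\<lambda>x. cnj (g x)) \<in> borel_measurable M"
proof -
  have "cnj \<in> borel_measurable borel" by (intro borel_measurable_continuous_onI continuous_intros)
  then show "g \<in> borel_measurable M \<Longrightarrow> (\<lambda>x. cnj (g x)) \<in> borel_measurable M"
    using measurable_compose by blast
qed

lemma DF_meas: assumes "smooth_fun f" shows "DF K p a f i \<in> borel_measurable borel"
proof -
  note [measurable] = sm_meas[OF assms] sm_pd_meas[OF assms, of i]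
  have "(\<lambda>x. Re (cnj (f x) * pdiff i f x)) \<in> borel_measurable borel" by measurable
  have "(\<lambda>x. normK K x powr (-a-1) * (x $ i / normK K x)) \<in> borel_measurable borel" by measurable
  show ?thesis unfolding DF_def[abs_def] by measurable
qed


lemma DF_int_zero:
  fixes f :: "real^'n::finite \<Rightarrow> complex"
  assumes sm: "smooth_fun f" and p: "1 < p" and iK: "i \<in> K"
    and S: "compact S" "S \<inter> {x. normK K x = 0} = {}" "\<forall>x. x \<notin> S \<longrightarrow> f x = 0"
  shows "integrable lborel (DF K p a f i) \<and> integral\<^sup>L lborel (DF K p a f i) = 0"
proof -
  define e :: "real^'n" where "e = axis i 1"
  define psi where "psi = psiF K p a f i"
  define D where "D = DF K p a f i"
  have rpos: "\<And>x. x \<in> S \<Longrightarrow> normK K x > 0"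
    using S(2) normK_nonneg by (metis (mono_tags, lifting) disjoint_iff less_eq_real_def mem_Collect_eq)
  have fS: "continuous_on S f" using sm_cont[OF sm] continuous_on_subset by blast
  have dS: "continuous_on S (pdiff i f)" using sm_pd_cont[OF sm] continuous_on_subset by blast
  have rS: "continuous_on S (normK K)" using normK_cont continuous_on_subset by blast
  have rpS: "continuous_on S (\<lambda>x. normK K x powr c)" for c
    by (intro continuous_on_powr rS continuous_intros) (use rpos in force)
  have fpS: "continuous_on S (\<lambda>x. cmod (f x) powr q)" if "q > 0" for q
    using that by (intro continuous_on_powr' fS continuous_intros) auto
  have psi_cont: "continuous_on S psi"
    unfolding psi_def psiF_def[abs_def] using p
    by (intro continuous_intros rpS fpS) auto
  have psi0: "psi x = 0" if "x \<notin> S" for x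
    using S(3) that p by (simp add: psi_def psiF_def)
  have D0: "D x = 0" if "x \<notin> S" for x
    using S(3) that p by (simp add: D_def DF_def)
  have psi_int: "integrable lborel psi" by (rule int_cs[OF S(1) psi_cont psi0])
  have psi_m[measurable]: "psi \<in> borel_measurable borel" unfolding psi_def by (rule psi_meas[OF sm])
  have D_m[measurable]: "D \<in> borel_measurable borel" unfolding D_def by (rule DF_meas[OF sm])
  define M where "M y = normK K y powr (-a) * cmod (f y) powr p
     + \<bar>y $ i\<bar> * (\<bar>a\<bar> * normK K y powr (-a-1) * (\<bar>y $ i\<bar> / normK K y)) * cmod (f y) powr p
     + \<bar>y $ i\<bar> * normK K y powr (-a) * (p * (cmod (f y) powr (p-1) * cmod (pdiff i f y)))" for y
  have M_cont: "continuous_on S M"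
  proof -
    have ci: "continuous_on S (\<lambda>y. \<bar>y $ i\<bar>)" by (intro continuous_intros)
    have cdiv: "continuous_on S (\<lambda>y. \<bar>y $ i\<bar> / normK K y)"
      by (rule continuous_on_divide[OF ci rS]) (use rpos in force)
    have fp1: "continuous_on S (\<lambda>x. cmod (f x) powr p)" using p by (intro fpS) simp
    have fp2: "continuous_on S (\<lambda>x. cmod (f x) powr (p-1))" using p by (intro fpS) simp
    have cd: "continuous_on S (\<lambda>x. cmod (pdiff i f x))" by (rule continuous_on_norm[OF dS])
    show ?thesis unfolding M_def
      by (intro continuous_on_add continuous_on_mult continuous_on_const ci cdiv rpS fp1 fp2 cd)
  qed
  obtain B where B: "B \<ge> 0" "\<And>x. x \<in> S \<Longrightarrow> \<bar>M x\<bar> \<le> B"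
    using bdd_cs[OF S(1) M_cont] by blast
  have DM: "\<bar>D y\<bar> \<le> M y" for y
  proof -
    have t3: "\<bar>y $ i * normK K y powr (-a) * (p * cmod (f y) powr (p-2) * Re (cnj (f y) * pdiff i f y))\<bar>
        \<le> \<bar>y $ i\<bar> * normK K y powr (-a) * (p * (cmod (f y) powr (p-1) * cmod (pdiff i f y)))"
    proof -
      have "\<bar>p * cmod (f y) powr (p-2) * Re (cnj (f y) * pdiff i f y)\<bar>
          \<le> p * (cmod (f y) powr (p-1) * cmod (pdiff i f y))"
        using powr_re_bound[OF p, of "f y" "pdiff i f y"] p
        by (simp add: abs_mult mult.assoc mult_left_mono)
      then show ?thesis by (simp add: abs_mult mult_left_mono)
    qed
    have t2: "\<bar>y $ i * ((-a) * normK K y powr (-a-1) * (y $ i / normK K y)) * cmod (f y) powr p\<bar>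
       = \<bar>y $ i\<bar> * (\<bar>a\<bar> * normK K y powr (-a-1) * (\<bar>y $ i\<bar> / normK K y)) * cmod (f y) powr p"
      by (simp add: abs_mult)
    have t1: "\<bar>normK K y powr (-a) * cmod (f y) powr p\<bar> = normK K y powr (-a) * cmod (f y) powr p"
      by simp
    have tri: "\<bar>u + v + w\<bar> \<le> \<bar>u\<bar> + \<bar>v\<bar> + \<bar>w\<bar>" for u v w :: real by linarith
    show ?thesis unfolding D_def DF_def M_def
      by (rule order_trans[OF tri]) (use t1 t2 t3 in linarith)
  qed
  have DB: "\<bar>D y\<bar> \<le> B" for y
  proof (cases "y \<in> S")
    case True then show ?thesis using DM[of y] B(2)[of y] by linarith
  next
    case False then show ?thesis using D0 B(1) by simp
  qed
  have deriv: "((\<lambda>s. psi (y + s *\<^sub>R e)) has_real_derivative D (y + s *\<^sub>R e)) (at s)" for y s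
  proof -
    have "((\<lambda>u. psi ((y + s *\<^sub>R e) + u *\<^sub>R e)) has_real_derivative D (y + s *\<^sub>R e)) (at 0)"
      unfolding psi_def D_def e_def by (rule psi_deriv[OF sm p iK S])
    moreover have "(\<lambda>u. psi ((y + s *\<^sub>R e) + u *\<^sub>R e)) = (\<lambda>u. psi (y + (u + s) *\<^sub>R e))"
      by (simp add: algebra_simps)
    ultimately have "((\<lambda>u. psi (y + (u + s) *\<^sub>R e)) has_real_derivative D (y + s *\<^sub>R e)) (at 0)"
      by simp
    then show ?thesis using DERIV_shift[of "\<lambda>s. psi (y + s *\<^sub>R e)" "D (y + s *\<^sub>R e)" 0 s] by simp
  qed
  have mvt: "\<bar>psi (y + t *\<^sub>R e) - psi y\<bar> \<le> B * t" if tp: "t > 0" for y t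
  proof -
    obtain z where "0 < z" "z < t" "psi (y + t *\<^sub>R e) - psi (y + 0 *\<^sub>R e) = (t - 0) * D (y + z *\<^sub>R e)"
      using MVT2[OF tp, of "\<lambda>s. psi (y + s *\<^sub>R e)" "\<lambda>s. D (y + s *\<^sub>R e)"] deriv by blast
    then have "\<bar>psi (y + t *\<^sub>R e) - psi y\<bar> = t * \<bar>D (y + z *\<^sub>R e)\<bar>"
      using tp by (simp add: abs_mult)
    also have "\<dots> \<le> t * B" using DB tp by (simp add: mult_left_mono)
    finally show ?thesis by (simp add: mult.commute)
  qed
  define tn :: "nat \<Rightarrow> real" where "tn n = inverse (real (Suc n))" for n
  have tn_pos: "tn n > 0" for n by (simp add: tn_def)
  have tn_le: "tn n \<le> 1" for n unfolding tn_def by (simp add: inverse_eq_divide)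
  define sq where "sq n y = (psi (y + tn n *\<^sub>R e) - psi y) / tn n" for n y
  define T where "T = {x + z | x z. x \<in> S \<and> z \<in> cball (0::real^'n) 1}"
  have T: "compact T" unfolding T_def by (rule compact_sums[OF S(1)]) simp
  have sq0: "sq n y = 0" if "y \<notin> T" for n y
  proof -
    have "y \<notin> S" using that unfolding T_def by (metis (mono_tags, lifting) add_0_right centre_in_cball mem_Collect_eq zero_le_one)
    moreover have "y + tn n *\<^sub>R e \<notin> S"
    proof
      assume "y + tn n *\<^sub>R e \<in> S"
      moreover have "- (tn n *\<^sub>R e) \<in> cball 0 1"
        using tn_le[of n] tn_pos[of n] by (simp add: e_def)
      ultimately have "(y + tn n *\<^sub>R e) + - (tn n *\<^sub>R e) \<in> T" unfolding T_def by blast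
      then have "y \<in> T" by simp
      with that show False by simp
    qed
    ultimately show ?thesis by (simp add: sq_def psi0)
  qed
  have sq_bound: "norm (sq n y) \<le> B * indicator T y" for n y
  proof (cases "y \<in> T")
    case True
    have "\<bar>sq n y\<bar> = \<bar>psi (y + tn n *\<^sub>R e) - psi y\<bar> / tn n"
      using tn_pos[of n] by (simp add: sq_def abs_divide)
    also have "\<dots> \<le> B" using mvt[OF tn_pos[of n], of y] tn_pos[of n] by (simp add: divide_le_eq)
    finally show ?thesis using True by simp
  next
    case False then show ?thesis using sq0 by simp
  qed
  have sq_m: "sq n \<in> borel_measurable borel" for n
    unfolding sq_def[abs_def] by measurable
  have w_int: "integrable lborel (\<lambda>y. B * indicator T y)"
    using T by (intro integrable_mult_right integrable_real_indicator emeasure_compact_finite) (auto intro: borel_compact)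
  have conv: "(\<lambda>n. sq n y) \<longlonglongrightarrow> D y" for y
  proof -
    have "((\<lambda>s. psi (y + s *\<^sub>R e)) has_real_derivative D y) (at 0)"
      using deriv[of y 0] by simp
    then have L: "(\<lambda>h. (psi (y + h *\<^sub>R e) - psi y) / h) \<midarrow>0\<rightarrow> D y"
      by (simp add: DERIV_def)
    have "tn \<longlonglongrightarrow> 0" unfolding tn_def by (rule LIMSEQ_inverse_real_of_nat)
    moreover have "\<forall>n. tn n \<noteq> 0" using tn_pos by (metis less_irrefl)
    ultimately show ?thesis
      using L LIMSEQ_SEQ_conv[of 0 "\<lambda>h. (psi (y + h *\<^sub>R e) - psi y) / h" "D y"]
      unfolding sq_def by blast
  qed
  have D_ml: "D \<in> borel_measurable lborel" using D_m by simp
  have sq_ml: "sq n \<in> borel_measurable lborel" for n using sq_m by simp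
  have AEc: "AE y in lborel. (\<lambda>n. sq n y) \<longlonglongrightarrow> D y" using conv by simp
  have AEb: "AE y in lborel. norm (sq n y) \<le> B * indicator T y" for n using sq_bound by simp
  have DC: "integrable lborel D" "(\<lambda>n. integral\<^sup>L lborel (sq n)) \<longlonglongrightarrow> integral\<^sup>L lborel D"
    using integrable_dominated_convergence[OF D_ml sq_ml w_int AEc AEb]
      integral_dominated_convergence[OF D_ml sq_ml w_int AEc AEb] by auto
  have sq_int0: "integral\<^sup>L lborel (sq n) = 0" for n
  proof -
    have tr: "integrable lborel (\<lambda>y. psi (tn n *\<^sub>R e + y))"
        "integral\<^sup>L lborel (\<lambda>y. psi (tn n *\<^sub>R e + y)) = integral\<^sup>L lborel psi"
      using transl[OF psi_int psi_m] by auto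
    have "integral\<^sup>L lborel (sq n) = integral\<^sup>L lborel (\<lambda>y. psi (tn n *\<^sub>R e + y) - psi y) / tn n"
      unfolding sq_def by (simp add: add.commute)
    also have "\<dots> = 0" using tr psi_int by simp
    finally show ?thesis .
  qed
  have "integral\<^sup>L lborel D = 0"
    using DC(2) unfolding sq_int0 by (simp add: LIMSEQ_const_iff)
  then show ?thesis using DC(1) unfolding D_def by simp
qed


lemma Cp_expand:
  fixes \<xi> F :: complex and c p :: real
  assumes p: "1 < p"
  shows "Cp p \<xi> (\<xi> + of_real c * F) = cmod \<xi> powr p + (p-1) * (\<bar>c\<bar> powr p * cmod F powr p)
           + p * c * \<bar>c\<bar> powr (p-2) * (cmod F powr (p-2) * Re (F * cnj \<xi>))"
proof (cases "of_real c * F = 0")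
  case True
  then have "c = 0 \<or> F = 0" by simp
  then show ?thesis using True p by (auto simp: Cp_def)
next
  case False
  then have c0: "c \<noteq> 0" and F0: "F \<noteq> 0" by auto
  have ne: "\<xi> \<noteq> \<xi> + of_real c * F" using False by simp
  have d: "\<xi> - (\<xi> + of_real c * F) = - (of_real c * F)" by simp
  have m: "cmod (- (of_real c * F)) = \<bar>c\<bar> * cmod F" by (simp add: norm_mult)
  have re: "Re (- (of_real c * F) * cnj (\<xi> + of_real c * F)) = - c * Re (F * cnj \<xi>) - c^2 * (cmod F)^2"
  proof -
    have "Re (F * cnj F) = (cmod F)^2" by (simp add: complex_mult_cnj cmod_def)
    then have h: "Im F * Im F + Re F * Re F = cmod F * cmod F" by (simp add: power2_eq_square algebra_simps)
    have "c * (c * (cmod F * cmod F)) = c * (c * (Im F * Im F)) + c * (c * (Re F * Re F))"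
      by (simp add: h[symmetric] algebra_simps)
    then show ?thesis by (simp add: algebra_simps power2_eq_square)
  qed
  have e1: "c^2 * \<bar>c\<bar> powr (p-2) = \<bar>c\<bar> powr p"
  proof -
    have "\<bar>c\<bar> powr (p-2) * \<bar>c\<bar> powr 2 = \<bar>c\<bar> powr (p-2+2)" by (rule powr_add[symmetric])
    then show ?thesis using c0 by (simp add: powr_numeral mult.commute)
  qed
  have e2: "cmod F powr (p-2) * (cmod F)^2 = cmod F powr p"
  proof -
    have "cmod F powr (p-2) * cmod F powr 2 = cmod F powr (p-2+2)" by (rule powr_add[symmetric])
    then show ?thesis using F0 by (simp add: powr_numeral)
  qed
  have "Cp p \<xi> (\<xi> + of_real c * F) = cmod \<xi> powr p - (\<bar>c\<bar> powr p * cmod F powr p)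
      - p * (\<bar>c\<bar> powr (p-2) * cmod F powr (p-2)) * (- c * Re (F * cnj \<xi>) - c^2 * (cmod F)^2)"
    unfolding Cp_def using ne by (simp only: if_False d m re powr_mult)
  also have "\<dots> = cmod \<xi> powr p - (\<bar>c\<bar> powr p * cmod F powr p)
      + p * c * \<bar>c\<bar> powr (p-2) * (cmod F powr (p-2) * Re (F * cnj \<xi>))
      + p * (c^2 * \<bar>c\<bar> powr (p-2)) * (cmod F powr (p-2) * (cmod F)^2)"
    by (simp add: algebra_simps)
  also have "\<dots> = cmod \<xi> powr p + (p-1) * (\<bar>c\<bar> powr p * cmod F powr p)
           + p * c * \<bar>c\<bar> powr (p-2) * (cmod F powr (p-2) * Re (F * cnj \<xi>))"
    unfolding e1 e2 by (simp add: algebra_simps)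
  finally show ?thesis .
qed


lemma normK_sq: "(normK K x)^2 = (\<Sum>i\<in>K. (x $ i)^2)"
  unfolding normK_def by (simp add: sum_nonneg)

lemma DF_sum:
  fixes f :: "real^'n::finite \<Rightarrow> complex" and K :: "'n set" and x :: "real^'n" and \<alpha> p :: real
  assumes p: "1 < p"
  defines "F \<equiv> f x / of_real (normK K x powr (\<alpha> / p))"
      and "\<xi> \<equiv> radial_deriv K f x / of_real (normK K x powr (\<alpha> / p))"
  shows "(\<Sum>i\<in>K. DF K p \<alpha> f i x) = (real (card K) - \<alpha>) * cmod F powr p
           + p * (cmod F powr (p-2) * Re (F * cnj \<xi>))"
proof (cases "normK K x = 0")
  case True
  then show ?thesis by (simp add: DF_def F_def \<xi>_def)
next
  case False
  define r where "r = normK K x"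
  have r: "r > 0" using False normK_nonneg[of K x] unfolding r_def by linarith
  define a where "a = r powr (\<alpha> / p)"
  have a: "a > 0" using r by (simp add: a_def)
  have ap: "a powr p = r powr \<alpha>" using p r by (simp add: a_def powr_powr)
  define \<phi> where "\<phi> = cmod (f x) powr p"
  define R where "R = radial_deriv K f x"
  have FE: "F = f x / of_real a" unfolding F_def a_def r_def ..
  have \<xi>E: "\<xi> = R / of_real a" unfolding \<xi>_def a_def r_def R_def ..
  have i1: "cmod F powr p = r powr (-\<alpha>) * \<phi>"
  proof -
    have "cmod F = cmod (f x) / a" using a by (simp add: FE norm_divide)
    then have "cmod F powr p = \<phi> / a powr p" by (simp add: powr_divide \<phi>_def)
    then show ?thesis by (simp add: ap powr_minus divide_inverse mult.commute)
  qed
  have i2: "cmod F powr (p-2) * Re (F * cnj \<xi>) = r powr (-\<alpha>) * (cmod (f x) powr (p-2) * Re (cnj (f x) * R))"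
  proof (cases "f x = 0")
    case True then show ?thesis by (simp add: FE)
  next
    case False
    have "cmod F = cmod (f x) / a" using a by (simp add: FE norm_divide)
    then have c1: "cmod F powr (p-2) = cmod (f x) powr (p-2) / a powr (p-2)" by (simp add: powr_divide)
    have c2: "Re (F * cnj \<xi>) = Re (cnj (f x) * R) / a^2"
    proof -
      have "F * cnj \<xi> = cnj (cnj (f x) * R) / of_real (a^2)"
        using a by (simp add: FE \<xi>E power2_eq_square)
      then show ?thesis by (simp add: Re_divide_of_real)
    qed
    have c3: "a powr (p-2) * a^2 = r powr \<alpha>"
    proof -
      have "a powr (p-2) * a powr 2 = a powr (p-2+2)" by (rule powr_add[symmetric])
      then show ?thesis using a ap by (simp add: powr_numeral)
    qed
    show ?thesis unfolding c1 c2 using a r c3[symmetric]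
      by (simp add: powr_minus field_simps)
  qed
  have rsq: "(\<Sum>i\<in>K. (x $ i)^2) = r^2" unfolding r_def by (simp add: normK_sq)
  have rr: "r powr (-\<alpha>-1) * (1 / r) * r^2 = r powr (-\<alpha>)"
  proof -
    have "r powr (-\<alpha>-1) = r powr (-\<alpha>) / r" using r by (simp add: powr_diff)
    then show ?thesis using r by (simp add: power2_eq_square)
  qed
  have ReR: "Re (cnj (f x) * R) = (\<Sum>i\<in>K. x $ i * Re (cnj (f x) * pdiff i f x))"
    unfolding R_def radial_deriv_def by (simp add: sum_distrib_left Re_sum) (rule sum.cong, auto simp: algebra_simps)
  have "(\<Sum>i\<in>K. DF K p \<alpha> f i x) =
     (\<Sum>i\<in>K. r powr (-\<alpha>) * \<phi>) + (\<Sum>i\<in>K. (x $ i)^2 * ((-\<alpha>) * (r powr (-\<alpha>-1) * (1 / r)) * \<phi>))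
     + (\<Sum>i\<in>K. x $ i * Re (cnj (f x) * pdiff i f x)) * (r powr (-\<alpha>) * (p * cmod (f x) powr (p-2)))"
  proof -
    have t: "DF K p \<alpha> f i x = r powr (-\<alpha>) * \<phi> + (x $ i)^2 * ((-\<alpha>) * (r powr (-\<alpha>-1) * (1 / r)) * \<phi>)
       + x $ i * Re (cnj (f x) * pdiff i f x) * (r powr (-\<alpha>) * (p * cmod (f x) powr (p-2)))" for i
      unfolding DF_def r_def[symmetric] \<phi>_def[symmetric]
      by (simp add: power2_eq_square algebra_simps)
    show ?thesis unfolding t by (simp add: sum.distrib sum_distrib_right sum_subtractf sum_negf)
  qed
  also have "\<dots> = real (card K) * (r powr (-\<alpha>) * \<phi>) - \<alpha> * (r powr (-\<alpha>-1) * (1 / r) * r^2) * \<phi>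
     + Re (cnj (f x) * R) * (r powr (-\<alpha>) * (p * cmod (f x) powr (p-2)))"
  proof -
    have s2: "(\<Sum>i\<in>K. (x $ i)^2 * Q) = r^2 * Q" for Q
      by (simp add: sum_distrib_right[symmetric] rsq)
    show ?thesis unfolding ReR s2 sum_constant by (simp add: algebra_simps)
  qed
  also have "\<dots> = (real (card K) - \<alpha>) * cmod F powr p + p * (cmod F powr (p-2) * Re (F * cnj \<xi>))"
    unfolding rr i1 i2 by (simp add: algebra_simps)
  finally show ?thesis .
qed


lemma pdiff_zero:
  fixes f :: "real^'n::finite \<Rightarrow> complex"
  assumes sm: "smooth_fun f" and S: "compact S" "\<forall>x. x \<notin> S \<longrightarrow> f x = 0" and x: "x \<notin> S"
  shows "pdiff i f x = 0"
proof -
  obtain e where e: "e > 0" "\<And>z. dist z x < e \<Longrightarrow> f z = 0"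
    using away_zero[OF S x] by blast
  have "((\<lambda>t. f (x + t *\<^sub>R axis i 1)) has_vector_derivative 0) (at 0 within UNIV)"
  proof (rule has_vector_derivative_transform_within[of "\<lambda>_. 0" 0 0 UNIV e])
    show "((\<lambda>_. 0) has_vector_derivative 0) (at 0)" by simp
    show "0 < e" by fact
    show "(0::real) \<in> UNIV" by simp
    fix t :: real assume "dist t 0 < e"
    then have "dist (x + t *\<^sub>R axis i 1) x < e" by (simp add: dist_norm)
    then show "0 = f (x + t *\<^sub>R axis i 1)" using e(2) by simp
  qed
  then show ?thesis using vector_derivative_unique_at[OF sm_line[OF sm]] by simp
qed

lemma rad_bound: "cmod (radial_deriv K f x) \<le> normK K x * grad_norm f x"
proof -
  have "cmod (radial_deriv K f x) \<le> (\<Sum>i\<in>K. cmod (of_real (x $ i) * pdiff i f x))"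
    unfolding radial_deriv_def by (rule norm_sum)
  also have "\<dots> = (\<Sum>i\<in>K. \<bar>x $ i\<bar> * \<bar>cmod (pdiff i f x)\<bar>)" by (simp add: norm_mult)
  also have "\<dots> \<le> L2_set (\<lambda>i. x $ i) K * L2_set (\<lambda>i. cmod (pdiff i f x)) K"
    by (rule L2_set_mult_ineq)
  also have "\<dots> \<le> normK K x * grad_norm f x"
  proof (rule mult_mono)
    show "L2_set (\<lambda>i. x $ i) K \<le> normK K x" by (simp add: L2_set_def normK_def)
    show "0 \<le> normK K x" by simp
    show "0 \<le> L2_set (\<lambda>i. cmod (pdiff i f x)) K" by (rule L2_set_nonneg)
    show "L2_set (\<lambda>i. cmod (pdiff i f x)) K \<le> grad_norm f x"
      unfolding L2_set_def grad_norm_def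
      by (intro real_sqrt_le_mono sum_mono2) auto
  qed
  finally show ?thesis .
qed

lemma xi_bound:
  assumes p: "1 < p"
  shows "cmod (radial_deriv K f x / of_real (normK K x powr (\<alpha> / p))) powr p
     \<le> (grad_norm f x / normK K x powr (\<alpha> / p - 1)) powr p"
proof (cases "normK K x = 0")
  case True then show ?thesis by simp
next
  case False
  define r where "r = normK K x"
  have r: "r > 0" using False normK_nonneg[of K x] unfolding r_def by linarith
  define a where "a = r powr (\<alpha> / p)"
  have a: "a > 0" using r by (simp add: a_def)
  have e1: "r powr (\<alpha> / p - 1) = a / r" using r by (simp add: a_def powr_diff)
  have g0: "grad_norm f x \<ge> 0" by (simp add: grad_norm_def sum_nonneg)
  have "cmod (radial_deriv K f x / of_real a) \<le> grad_norm f x / (a / r)"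
  proof -
    have "cmod (radial_deriv K f x / of_real a) = cmod (radial_deriv K f x) / a"
      using a by (simp add: norm_divide)
    also have "\<dots> \<le> r * grad_norm f x / a"
      using rad_bound[of K f x] a by (simp add: r_def divide_right_mono)
    also have "\<dots> = grad_norm f x / (a / r)" using r a by (simp add: field_simps)
    finally show ?thesis .
  qed
  then show ?thesis unfolding r_def[symmetric] a_def[symmetric] e1
    using p by (intro powr_mono2) auto
qed


lemma c_sq: "c^2 * \<bar>c\<bar> powr (p-2) = \<bar>c::real\<bar> powr p"
proof (cases "c = 0")
  case True then show ?thesis by simp
next
  case False
  have "\<bar>c\<bar> powr (p-2) * \<bar>c\<bar> powr 2 = \<bar>c\<bar> powr (p-2+2)" by (rule powr_add[symmetric])
  then show ?thesis using False by (simp add: powr_numeral mult.commute)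
qed

theorem mainTheorem2:
  fixes K :: "'n::finite set" and p \<alpha> :: real and f :: "real^'n \<Rightarrow> complex"
  assumes "K \<noteq> {}"
    and "1 < p"
    and "smooth_fun f"
    and "\<exists>S. compact S \<and> S \<inter> {x. normK K x = 0} = {} \<and> (\<forall>x. x \<notin> S \<longrightarrow> f x = 0)"
  shows "\<bar>(real (card K) - \<alpha>) / p\<bar> powr p *
           (\<integral>x. cmod (f x / of_real (normK K x powr (\<alpha> / p))) powr p \<partial>lborel)
         \<le> (\<integral>x. (grad_norm f x / normK K x powr (\<alpha> / p - 1)) powr p \<partial>lborel)
           - (\<integral>x. Cp p (radial_deriv K f x / of_real (normK K x powr (\<alpha> / p)))
                   (radial_deriv K f x / of_real (normK K x powr (\<alpha> / p))
                    + of_real ((real (card K) - \<alpha>) / p) * (f x / of_real (normK K x powr (\<alpha> / p))))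
               \<partial>lborel)"
proof -
  note p = assms(2) and sm = assms(3)
  obtain S where S: "compact S" "S \<inter> {x. normK K x = 0} = {}" "\<forall>x. x \<notin> S \<longrightarrow> f x = 0"
    using assms(4) by blast
  define c where "c = (real (card K) - \<alpha>) / p"
  define F where "F x = f x / of_real (normK K x powr (\<alpha> / p))" for x
  define \<xi> where "\<xi> x = radial_deriv K f x / of_real (normK K x powr (\<alpha> / p))" for x
  define W where "W x = cmod (F x) powr (p-2) * Re (F x * cnj (\<xi> x))" for x
  define G where "G x = (grad_norm f x / normK K x powr (\<alpha> / p - 1)) powr p" for x
  define A where "A x = cmod (F x) powr p" for x
  define X where "X x = cmod (\<xi> x) powr p" for x
  have rpos: "\<And>x. x \<in> S \<Longrightarrow> normK K x > 0"
    using S(2) normK_nonneg by (metis (mono_tags, lifting) disjoint_iff less_eq_real_def mem_Collect_eq)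
  have fS: "continuous_on S f" using sm_cont[OF sm] continuous_on_subset by blast
  have dS: "continuous_on S (pdiff i f)" for i using sm_pd_cont[OF sm] continuous_on_subset by blast
  have rS: "continuous_on S (normK K)" using normK_cont continuous_on_subset by blast
  have rpS: "continuous_on S (\<lambda>x. normK K x powr e)" for e
    by (intro continuous_on_powr rS continuous_intros) (use rpos in force)
  have apS: "continuous_on S (\<lambda>x. complex_of_real (normK K x powr e))" for e
    by (intro continuous_on_of_real rpS)
  have F_cont: "continuous_on S F"
    unfolding F_def[abs_def]
    by (rule continuous_on_divide[OF fS apS]) (use rpos in force)
  have R_cont: "continuous_on S (radial_deriv K f)"
    unfolding radial_deriv_def[abs_def]
    by (intro continuous_on_sum continuous_on_mult continuous_on_of_real continuous_on_component
          continuous_on_id dS)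
  have xi_cont: "continuous_on S \<xi>"
    unfolding \<xi>_def[abs_def]
    by (rule continuous_on_divide[OF R_cont apS]) (use rpos in force)
  have g_cont: "continuous_on S (grad_norm f)"
    unfolding grad_norm_def[abs_def]
    by (intro continuous_on_real_sqrt continuous_on_sum continuous_on_power continuous_on_norm dS)
  have A_int: "integrable lborel A"
  proof (rule int_cs[OF S(1)])
    show "continuous_on S A" unfolding A_def[abs_def]
      using p by (intro continuous_on_powr' continuous_on_norm F_cont continuous_on_const) auto
    show "A x = 0" if "x \<notin> S" for x using S(3) that p by (simp add: A_def F_def)
  qed
  have X_int: "integrable lborel X"
  proof (rule int_cs[OF S(1)])
    show "continuous_on S X" unfolding X_def[abs_def]
      using p by (intro continuous_on_powr' continuous_on_norm xi_cont continuous_on_const) auto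
    show "X x = 0" if "x \<notin> S" for x
      using pdiff_zero[OF sm S(1) S(3) that] p by (simp add: X_def \<xi>_def radial_deriv_def)
  qed
  have G_int: "integrable lborel G"
  proof (rule int_cs[OF S(1)])
    have q: "continuous_on S (\<lambda>x. grad_norm f x / normK K x powr (\<alpha> / p - 1))"
      by (rule continuous_on_divide[OF g_cont rpS]) (use rpos in force)
    show "continuous_on S G" unfolding G_def[abs_def]
      using p by (intro continuous_on_powr' q continuous_on_const) (auto simp: grad_norm_def sum_nonneg)
    show "G x = 0" if "x \<notin> S" for x
      using pdiff_zero[OF sm S(1) S(3) that] p by (simp add: G_def grad_norm_def)
  qed
  have DFi: "integrable lborel (DF K p \<alpha> f i) \<and> integral\<^sup>L lborel (DF K p \<alpha> f i) = 0" if "i \<in> K" for i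
    by (rule DF_int_zero[OF sm p that S])
  have Wexp: "W x = ((\<Sum>i\<in>K. DF K p \<alpha> f i x) - (real (card K) - \<alpha>) * A x) / p" for x
  proof -
    have ds: "(\<Sum>i\<in>K. DF K p \<alpha> f i x) = (real (card K) - \<alpha>) * A x + p * W x"
      using DF_sum[OF p, of K \<alpha> f x] unfolding W_def A_def F_def \<xi>_def .
    show ?thesis using p unfolding ds by (simp add: field_simps)
  qed
  have sumint: "integrable lborel (\<lambda>x. \<Sum>i\<in>K. DF K p \<alpha> f i x)"
    by (rule Bochner_Integration.integrable_sum[where I=K and M=lborel and f="\<lambda>i. DF K p \<alpha> f i"]) (use DFi in blast)
  have sum0: "integral\<^sup>L lborel (\<lambda>x. \<Sum>i\<in>K. DF K p \<alpha> f i x) = 0"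
    using Bochner_Integration.integral_sum[where I=K and M=lborel and f="\<lambda>i. DF K p \<alpha> f i"] DFi by simp
  have W_int: "integrable lborel W" unfolding Wexp[abs_def]
    using sumint A_int by (intro Bochner_Integration.integrable_divide_zero Bochner_Integration.integrable_diff Bochner_Integration.integrable_mult_right)
  have W_val: "integral\<^sup>L lborel W = - c * integral\<^sup>L lborel A"
  proof -
    have "integral\<^sup>L lborel W = (integral\<^sup>L lborel (\<lambda>x. \<Sum>i\<in>K. DF K p \<alpha> f i x)
          - (real (card K) - \<alpha>) * integral\<^sup>L lborel A) / p"
      unfolding Wexp[abs_def] using sumint A_int by simp
    then show ?thesis unfolding sum0 c_def by simp
  qed
  have Cpe: "Cp p (\<xi> x) (\<xi> x + of_real c * F x) = X x + (p-1) * (\<bar>c\<bar> powr p * A x) + p * c * \<bar>c\<bar> powr (p-2) * W x" for x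
    unfolding X_def A_def W_def by (rule Cp_expand[OF p])
  have Cp_val: "integral\<^sup>L lborel (\<lambda>x. Cp p (\<xi> x) (\<xi> x + of_real c * F x))
      = integral\<^sup>L lborel X + (p-1) * (\<bar>c\<bar> powr p * integral\<^sup>L lborel A) + p * c * \<bar>c\<bar> powr (p-2) * integral\<^sup>L lborel W"
    unfolding Cpe using X_int A_int W_int by simp
  have XG: "integral\<^sup>L lborel X \<le> integral\<^sup>L lborel G"
    using X_int G_int by (intro integral_mono) (use xi_bound[OF p] in \<open>auto simp: X_def G_def \<xi>_def\<close>)
  have key: "\<bar>c\<bar> powr p * integral\<^sup>L lborel A \<le> integral\<^sup>L lborel G - integral\<^sup>L lborel (\<lambda>x. Cp p (\<xi> x) (\<xi> x + of_real c * F x))"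
  proof -
    have "p * c * \<bar>c\<bar> powr (p-2) * integral\<^sup>L lborel W = - p * (c^2 * \<bar>c\<bar> powr (p-2)) * integral\<^sup>L lborel A"
      unfolding W_val by (simp add: power2_eq_square algebra_simps)
    also have "\<dots> = - p * (\<bar>c\<bar> powr p * integral\<^sup>L lborel A)" by (simp add: c_sq)
    finally have "p * c * \<bar>c\<bar> powr (p-2) * integral\<^sup>L lborel W = - p * (\<bar>c\<bar> powr p * integral\<^sup>L lborel A)" .
    then show ?thesis unfolding Cp_val using XG by (simp add: algebra_simps)
  qed
  show ?thesis using key unfolding c_def A_def F_def G_def \<xi>_def by simp
qed

end
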